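(* Let $k\ge2$ be an even integer and $Q_k(t)=t^k+k(t+1)^{k-1}-(t+1)^k$. Then there are constants $\bar C_k,\bar C_k'>0$ depending only on $k$ such that $$\bar C_k(t^{k-2}+1)\le Q_k(t)\le \bar C_k'(t^{k-2}+1)\quad\text{for all }t\in\mathbb{R}.$$ *)

theory Defs
  imports Complex_Main
begin

definition Q :: "nat \<Rightarrow> real \<Rightarrow> real" where
  "Q k t = t ^ k + real k * (t + 1) ^ (k - 1) - (t + 1) ^ k"

end

theory Submission
  imports Defs
begin

lemma odd_pow_less:
  fixes x y :: real
  assumes "odd n" "x < y"
  shows "x ^ n < y ^ n"
proof (cases "0 \<le> x")
  case True
  then show ?thesis using assms by (intro power_strict_mono) (auto elim: oddE)
next
  case False
  show ?thesis
  proof (cases "y \<le> 0")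
    case True
    have "(-y) ^ n < (-x) ^ n" using assms True False
      by (intro power_strict_mono) (auto elim: oddE)
    then show ?thesis using assms(1) by (simp add: power_minus_odd)
  next
    case F2: False
    have "\<not> 0 \<le> x ^ n" using False assms(1) zero_le_odd_power[of n x] by simp
    then have "x ^ n < 0" by linarith
    moreover have "0 < y ^ n" using F2 by simp
    ultimately show ?thesis by linarith
  qed
qed

lemma Q_taylor:
  fixes k :: nat and t :: real
  assumes "k \<ge> 2"
  shows "\<exists>z. t < z \<and> z < t + 1 \<and> Q k t = real k * real (k - 1) / 2 * z ^ (k - 2)"
proof -
  define diff :: "nat \<Rightarrow> real \<Rightarrow> real" where
    "diff = (\<lambda>m. if m = 0 then (\<lambda>x. x ^ k) else if m = 1 then (\<lambda>x. real k * x ^ (k - 1))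
              else (\<lambda>x. real k * real (k - 1) * x ^ (k - 2)))"
  have D: "\<forall>m s. m < 2 \<and> t \<le> s \<and> s \<le> t + 1 \<longrightarrow> DERIV (diff m) s :> diff (Suc m) s"
  proof (intro allI impI)
    fix m :: nat and s :: real assume "m < 2 \<and> t \<le> s \<and> s \<le> t + 1"
    then have "m = 0 \<or> m = 1" by auto
    then show "DERIV (diff m) s :> diff (Suc m) s"
    proof
      assume "m = 0"
      then show ?thesis unfolding diff_def using DERIV_pow[of k s] by simp
    next
      assume "m = 1"
      have "k - 1 - Suc 0 = k - 2" by simp
      then have "DERIV (\<lambda>x. real k * x ^ (k - 1)) s :> real k * (real (k - 1) * s ^ (k - 2))"
        using DERIV_cmult[OF DERIV_pow[of "k - 1" s], of "real k"] by simp
      then show ?thesis unfolding diff_def using \<open>m = 1\<close> by (simp add: mult.assoc)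
    qed
  qed
  have "diff 0 = (\<lambda>x. x ^ k)" unfolding diff_def by simp
  from Taylor_down[of 2 diff "\<lambda>x. x ^ k" t "t + 1" "t + 1", OF _ this D]
  obtain z where z: "t < z" "z < t + 1"
    "t ^ k = (\<Sum>m<2. diff m (t + 1) / fact m * (t - (t + 1)) ^ m) + diff 2 z / fact 2 * (t - (t + 1)) ^ 2"
    by auto
  have "t ^ k = (t + 1) ^ k - real k * (t + 1) ^ (k - 1) + real k * real (k - 1) / 2 * z ^ (k - 2)"
    using z(3) by (simp add: diff_def numeral_2_eq_2)
  then show ?thesis using z(1,2) unfolding Q_def by (intro exI[of _ z]) auto
qed

lemma Q_pos:
  fixes k :: nat and t :: real
  assumes "k \<ge> 2" "even k"
  shows "Q k t > 0"
proof -
  have "\<And>x. DERIV (\<lambda>x. x ^ k) x :> real k * x ^ (k - 1)"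
    using DERIV_pow by simp
  from MVT2[of t "t + 1" "\<lambda>x. x ^ k", OF _ this]
  obtain z where z: "t < z" "z < t + 1" "(t + 1) ^ k - t ^ k = real k * z ^ (k - 1)" by auto
  have "odd (k - 1)" using assms by simp
  then have "z ^ (k - 1) < (t + 1) ^ (k - 1)" using odd_pow_less z(2) by blast
  then have "real k * z ^ (k - 1) < real k * (t + 1) ^ (k - 1)" using assms by simp
  then show ?thesis using z(3) unfolding Q_def by simp
qed


lemma pow_bound:
  fixes t :: real and m :: nat
  shows "(\<bar>t\<bar> + 1) ^ m \<le> 2 ^ m * (\<bar>t\<bar> ^ m + 1)"
proof (cases "\<bar>t\<bar> \<le> 1")
  case True
  have "(\<bar>t\<bar> + 1) ^ m \<le> 2 ^ m" using True by (intro power_mono) auto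
  also have "\<dots> \<le> 2 ^ m * (\<bar>t\<bar> ^ m + 1)" by simp
  finally show ?thesis .
next
  case False
  have "(\<bar>t\<bar> + 1) ^ m \<le> (2 * \<bar>t\<bar>) ^ m" using False by (intro power_mono) auto
  also have "\<dots> = 2 ^ m * \<bar>t\<bar> ^ m" by (simp add: power_mult_distrib)
  also have "\<dots> \<le> 2 ^ m * (\<bar>t\<bar> ^ m + 1)" by simp
  finally show ?thesis .
qed

theorem lemmaA2:
  fixes k :: nat
  assumes "k \<ge> 2" and "even k"
  shows "\<exists>C C'. C > 0 \<and> C' > 0 \<and>
           (\<forall>t::real. C * (t ^ (k - 2) + 1) \<le> Q k t \<and> Q k t \<le> C' * (t ^ (k - 2) + 1))"
proof -
  define m where "m = k - 2"
  have em: "even m" using assms unfolding m_def by simp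
  have absm: "\<And>x::real. x ^ m = \<bar>x\<bar> ^ m" using em by (simp add: power_even_abs)
  define c0 :: real where "c0 = real k * real (k - 1) / 2"
  have c0: "c0 > 0" using assms unfolding c0_def by simp
  have cont: "continuous_on {-2..1::real} (Q k)" unfolding Q_def by (intro continuous_intros)
  obtain x0 where x0: "x0 \<in> {-2..1::real}" "\<And>y. y \<in> {-2..1} \<Longrightarrow> Q k x0 \<le> Q k y"
    using continuous_attains_inf[OF compact_Icc _ cont] by auto
  define M where "M = Q k x0"
  have M: "M > 0" unfolding M_def using Q_pos assms by blast
  define C where "C = min (M / (2 ^ m + 1)) (c0 / 2 ^ (m + 1))"
  define C' where "C' = c0 * 2 ^ m"
  have pos2: "(0::real) < 2 ^ m + 1" by (simp add: add_pos_pos)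
  then have Cpos: "C > 0" unfolding C_def using M c0 by simp
  have C'pos: "C' > 0" unfolding C'_def using c0 by simp
  have "C * (t ^ m + 1) \<le> Q k t \<and> Q k t \<le> C' * (t ^ m + 1)" for t :: real
  proof
    obtain z where z: "t < z" "z < t + 1" "Q k t = c0 * z ^ m"
      using Q_taylor[OF assms(1), of t] unfolding c0_def m_def by auto
    have "\<bar>z\<bar> \<le> \<bar>t\<bar> + 1" using z by linarith
    then have "\<bar>z\<bar> ^ m \<le> (\<bar>t\<bar> + 1) ^ m" by (intro power_mono) auto
    also have "\<dots> \<le> 2 ^ m * (\<bar>t\<bar> ^ m + 1)" by (rule pow_bound)
    finally have "z ^ m \<le> 2 ^ m * (t ^ m + 1)" using absm by metis
    then have "c0 * z ^ m \<le> c0 * (2 ^ m * (t ^ m + 1))" using c0 by (intro mult_left_mono) auto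
    then show "Q k t \<le> C' * (t ^ m + 1)" using z(3) unfolding C'_def by (simp add: mult.assoc)
  next
    obtain z where z: "t < z" "z < t + 1" "Q k t = c0 * z ^ m"
      using Q_taylor[OF assms(1), of t] unfolding c0_def m_def by auto
    have tm0: "t ^ m \<ge> 0" using em by (simp add: zero_le_even_power)
    have C1: "C \<le> M / (2 ^ m + 1)" and C2: "C \<le> c0 / 2 ^ (m + 1)" unfolding C_def by auto
    show "C * (t ^ m + 1) \<le> Q k t"
    proof (cases "t \<in> {-2..1}")
      case True
      have "\<bar>t\<bar> ^ m \<le> 2 ^ m" using True by (intro power_mono) auto
      then have "t ^ m + 1 \<le> 2 ^ m + 1" using absm[of t] by linarith
      then have "C * (t ^ m + 1) \<le> M / (2 ^ m + 1) * (2 ^ m + 1)"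
        using C1 Cpos tm0 by (intro mult_mono) auto
      also have "\<dots> = M" using pos2 by simp
      also have "\<dots> \<le> Q k t" unfolding M_def using x0(2) True by blast
      finally show ?thesis .
    next
      case False
      have key: "t ^ m + 1 \<le> 2 ^ (m + 1) * z ^ m"
      proof (cases "t > 1")
        case True
        have "t ^ m \<le> z ^ m" using True z by (intro power_mono) auto
        moreover have "1 \<le> t ^ m" using True by simp
        moreover have "(1::real) \<le> 2 ^ m" by simp
        moreover have "z ^ m \<ge> 0" using em by (simp add: zero_le_even_power)
        ultimately have "t ^ m + 1 \<le> 2 * z ^ m" by linarith
        also have "\<dots> \<le> 2 * 2 ^ m * z ^ m"
          using mult_right_mono[of "2::real" "2 * 2 ^ m" "z ^ m"] \<open>z ^ m \<ge> 0\<close> by simp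
        finally show ?thesis by simp
      next
        case F2: False
        then have "t < -2" using False by auto
        then have "\<bar>t\<bar> / 2 \<le> \<bar>z\<bar>" using z by linarith
        then have "(\<bar>t\<bar> / 2) ^ m \<le> \<bar>z\<bar> ^ m" by (intro power_mono) auto
        then have "\<bar>t\<bar> ^ m \<le> 2 ^ m * \<bar>z\<bar> ^ m" by (simp add: power_divide field_simps)
        moreover have "1 \<le> \<bar>t\<bar> ^ m" using \<open>t < -2\<close> by simp
        ultimately have "\<bar>t\<bar> ^ m + 1 \<le> 2 * (2 ^ m * \<bar>z\<bar> ^ m)" by linarith
        then show ?thesis using absm by (metis power_Suc mult.assoc Suc_eq_plus1)
      qed
      have "C * (t ^ m + 1) \<le> c0 / 2 ^ (m + 1) * (t ^ m + 1)"
        using C2 tm0 by (intro mult_right_mono) auto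
      also have "\<dots> \<le> c0 / 2 ^ (m + 1) * (2 ^ (m + 1) * z ^ m)"
        using key c0 by (intro mult_left_mono) auto
      also have "\<dots> = Q k t" using z(3) by simp
      finally show ?thesis .
    qed
  qed
  then show ?thesis using Cpos C'pos unfolding m_def by blast
qed

end
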